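(* Let $X_1,X_2\subset\mathbb{R}$ be endowed with the Borel $\sigma$-algebra $\mathcal{B}$, and let $(X_1,\mathcal{B},\mu_1,f_1)$ and $(X_2,\mathcal{B},\mu_2,f_2)$ be measure-preserving dynamical systems that are isomorphic via a continuous map $\phi:X_1\to X_2$ (so $\phi\circ f_1=f_2\circ\phi$). Suppose $f_1$ is topologically transitive and that, for all $x\in X_1$, the points $x$ (under $f_1$) and $\phi(x)$ (under $f_2$) define the same order patterns. Then $\phi$ is order-preserving, i.e. $x<x'$ in $X_1$ implies $\phi(x)<\phi(x')$.
   Context: For a map $T:X\to X$ on a totally ordered set and $L\geq 2$, a point $x$ defines the order pattern $\pi=[\pi_0,\dots,\pi_{L-1}]$ (a permutation of $\{0,\dots,L-1\}$) if $T^{\pi_0}(x)<T^{\pi_1}(x)<\dots<T^{\pi_{L-1}}(x)$. "$x$ and $\phi(x)$ define the same order patterns" means that for every $L\geq2$ and every permutation $\pi$ of $\{0,\dots,L-1\}$, $x$ defines $\pi$ under $f_1$ if and only if $\phi(x)$ defines $\pi$ under $f_2$. *)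

theory Defs
  imports "HOL-Probability.Probability"
begin

definition mpds :: "'a measure \<Rightarrow> ('a \<Rightarrow> 'a) \<Rightarrow> bool" where
  "mpds M f \<longleftrightarrow> prob_space M \<and> f \<in> measurable M M \<and> distr M M f = M"

definition mpds_isomorphism ::
  "'a measure \<Rightarrow> ('a \<Rightarrow> 'a) \<Rightarrow> 'b measure \<Rightarrow> ('b \<Rightarrow> 'b) \<Rightarrow> ('a \<Rightarrow> 'b) \<Rightarrow> bool" where
  "mpds_isomorphism M1 f1 M2 f2 \<phi> \<longleftrightarrow>
     bij_betw \<phi> (space M1) (space M2) \<and>
     \<phi> \<in> measurable M1 M2 \<and>
     the_inv_into (space M1) \<phi> \<in> measurable M2 M1 \<and>
     distr M1 M2 \<phi> = M2 \<and>
     (\<forall>x\<in>space M1. \<phi> (f1 x) = f2 (\<phi> x))"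

definition top_transitive :: "'a::topological_space set \<Rightarrow> ('a \<Rightarrow> 'a) \<Rightarrow> bool" where
  "top_transitive X f \<longleftrightarrow>
     (\<forall>U V. openin (top_of_set X) U \<and> openin (top_of_set X) V \<and> U \<noteq> {} \<and> V \<noteq> {} \<longrightarrow>
        (\<exists>n>0. (f ^^ n) ` U \<inter> V \<noteq> {}))"

definition is_perm_list :: "nat list \<Rightarrow> bool" where
  "is_perm_list \<pi> \<longleftrightarrow> distinct \<pi> \<and> set \<pi> = {..<length \<pi>}"

definition defines_pattern :: "('a::linorder \<Rightarrow> 'a) \<Rightarrow> 'a \<Rightarrow> nat list \<Rightarrow> bool" where
  "defines_pattern T x \<pi> \<longleftrightarrow>
     (\<forall>i. Suc i < length \<pi> \<longrightarrow> (T ^^ (\<pi> ! i)) x < (T ^^ (\<pi> ! Suc i)) x)"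

definition same_order_patterns ::
  "('a::linorder \<Rightarrow> 'a) \<Rightarrow> 'a \<Rightarrow> ('b::linorder \<Rightarrow> 'b) \<Rightarrow> 'b \<Rightarrow> bool" where
  "same_order_patterns T1 x T2 y \<longleftrightarrow>
     (\<forall>\<pi>. length \<pi> \<ge> 2 \<and> is_perm_list \<pi> \<longrightarrow>
        (defines_pattern T1 x \<pi> \<longleftrightarrow> defines_pattern T2 y \<pi>))"

end

theory Submission
  imports Defs
begin

lemma adj_to_lt:
  fixes h :: "nat \<Rightarrow> 'b::linorder"
  assumes "\<forall>i. Suc i < length \<pi> \<longrightarrow> h (\<pi> ! i) < h (\<pi> ! Suc i)"
  shows "p < q \<Longrightarrow> q < length \<pi> \<Longrightarrow> h (\<pi> ! p) < h (\<pi> ! q)"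
proof (induction q)
  case 0 then show ?case by simp
next
  case (Suc q)
  then have s: "h (\<pi> ! q) < h (\<pi> ! Suc q)" using assms by auto
  show ?case
  proof (cases "p = q")
    case True then show ?thesis using s by simp
  next
    case False then show ?thesis using Suc s by (meson less_Suc_eq order.strict_trans Suc_lessD)
  qed
qed

lemma pattern_transfer:
  fixes g :: "nat \<Rightarrow> 'a::linorder" and h :: "nat \<Rightarrow> 'b::linorder"
  assumes inj: "inj_on g {..<m}" and m2: "m \<ge> 2"
    and eq: "\<And>\<pi>. length \<pi> \<ge> 2 \<Longrightarrow> is_perm_list \<pi> \<Longrightarrow>
       (\<forall>i. Suc i < length \<pi> \<longrightarrow> g (\<pi> ! i) < g (\<pi> ! Suc i)) \<Longrightarrow>
       (\<forall>i. Suc i < length \<pi> \<longrightarrow> h (\<pi> ! i) < h (\<pi> ! Suc i))"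
    and ab: "a < m" "b < m" "g a < g b"
  shows "h a < h b"
proof -
  define \<pi> where "\<pi> = sort_key g [0..<m]"
  have len: "length \<pi> = m" unfolding \<pi>_def by simp
  have set: "set \<pi> = {..<m}" unfolding \<pi>_def by auto
  have dist: "distinct \<pi>" unfolding \<pi>_def by (simp add: distinct_sort)
  have sorted: "sorted (map g \<pi>)" unfolding \<pi>_def by (simp add: sorted_sort_key)
  have perm: "is_perm_list \<pi>" unfolding is_perm_list_def using len set dist by simp
  have adj: "\<forall>i. Suc i < length \<pi> \<longrightarrow> g (\<pi> ! i) < g (\<pi> ! Suc i)"
  proof (intro allI impI)
    fix i assume i: "Suc i < length \<pi>"
    have le: "g (\<pi> ! i) \<le> g (\<pi> ! Suc i)"
      using sorted i by (metis Suc_lessD length_map lessI nth_map sorted_iff_nth_mono_less less_imp_le)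
    have ne: "\<pi> ! i \<noteq> \<pi> ! Suc i" using dist i by (simp add: nth_eq_iff_index_eq)
    have "\<pi> ! i \<in> {..<m}" "\<pi> ! Suc i \<in> {..<m}" using set i by (metis Suc_lessD nth_mem)+
    then have "g (\<pi> ! i) \<noteq> g (\<pi> ! Suc i)" using inj ne by (meson inj_on_eq_iff)
    then show "g (\<pi> ! i) < g (\<pi> ! Suc i)" using le by simp
  qed
  have hadj: "\<forall>i. Suc i < length \<pi> \<longrightarrow> h (\<pi> ! i) < h (\<pi> ! Suc i)"
    using eq[OF _ perm adj] len m2 by simp
  obtain p where p: "p < m" "\<pi> ! p = a" using ab(1) set len by (metis in_set_conv_nth lessThan_iff)
  obtain q where q: "q < m" "\<pi> ! q = b" using ab(2) set len by (metis in_set_conv_nth lessThan_iff)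
  have "p < q"
  proof (rule ccontr)
    assume "\<not> p < q"
    then have "q \<le> p" by simp
    then have "g (\<pi> ! q) \<le> g (\<pi> ! p)"
      using sorted p q len by (metis length_map nth_map sorted_iff_nth_mono)
    then show False using p q ab(3) by simp
  qed
  then show ?thesis using adj_to_lt[OF hadj] p q len by metis
qed

theorem proposition2:
  fixes X1 X2 :: "real set"
    and M1 M2 :: "real measure"
    and f1 f2 \<phi> :: "real \<Rightarrow> real"
  assumes "space M1 = X1" and "sets M1 = sets (restrict_space borel X1)"
    and "space M2 = X2" and "sets M2 = sets (restrict_space borel X2)"
    and "mpds M1 f1" and "mpds M2 f2"
    and "mpds_isomorphism M1 f1 M2 f2 \<phi>"
    and "continuous_on X1 \<phi>"
    and "top_transitive X1 f1"
    and "\<forall>x\<in>X1. same_order_patterns f1 x f2 (\<phi> x)"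
  shows "\<forall>x\<in>X1. \<forall>x'\<in>X1. x < x' \<longrightarrow> \<phi> x < \<phi> x'"
proof -
  have f1X: "\<And>y. y \<in> X1 \<Longrightarrow> f1 y \<in> X1"
    using assms(1,5) unfolding mpds_def by (metis measurable_space)
  have iterX: "\<And>j y. y \<in> X1 \<Longrightarrow> (f1 ^^ j) y \<in> X1"
  proof -
    fix j y assume "y \<in> X1" then show "(f1 ^^ j) y \<in> X1" by (induction j) (auto intro: f1X)
  qed
  have comm: "\<And>y. y \<in> X1 \<Longrightarrow> \<phi> (f1 y) = f2 (\<phi> y)"
    using assms(1,7) unfolding mpds_isomorphism_def by auto
  have commj: "\<And>j y. y \<in> X1 \<Longrightarrow> (f2 ^^ j) (\<phi> y) = \<phi> ((f1 ^^ j) y)"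
  proof -
    fix j y assume y: "y \<in> X1" then show "(f2 ^^ j) (\<phi> y) = \<phi> ((f1 ^^ j) y)"
      by (induction j) (auto simp: comm iterX)
  qed
  have injphi: "inj_on \<phi> X1"
    using assms(1,7) unfolding mpds_isomorphism_def bij_betw_def by auto
  have A: "\<phi> y < \<phi> ((f1 ^^ n) y)" if y: "y \<in> X1" and yn: "y < (f1 ^^ n) y" for y n
  proof -
    define g where "g i = (f1 ^^ i) y" for i
    define h where "h i = (f2 ^^ i) (\<phi> y)" for i
    have "\<exists>m. inj_on g {..<m} \<and> (\<exists>k<m. g k = g n)"
    proof (cases "inj_on g {..<Suc n}")
      case True then show ?thesis by blast
    next
      case False
      define m0 where "m0 = (LEAST m. \<not> inj_on g {..<m})"
      have nm0: "\<not> inj_on g {..<m0}" unfolding m0_def using False by (rule LeastI)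
      have m0le: "m0 \<le> Suc n" unfolding m0_def using False by (rule Least_le)
      have "m0 \<noteq> 0" using nm0 by (rule contrapos_nn) simp
      then obtain m where m: "m0 = Suc m" by (cases m0) auto
      have im: "inj_on g {..<m}" using not_less_Least[of m "\<lambda>m. \<not> inj_on g {..<m}"] m m0_def by auto
      have "g m \<in> g ` {..<m}" using nm0 im m by (simp add: lessThan_Suc)
      then obtain r where r: "r < m" "g m = g r" by auto
      have all: "\<exists>k<m. g j = g k" for j
      proof (induction j)
        case 0 then show ?case using r by (metis gr_implies_not0 not_gr0)
      next
        case (Suc j)
        then obtain k where k: "k < m" "g j = g k" by auto
        have gs: "g (Suc j) = f1 (g j)" "g (Suc k) = f1 (g k)" by (simp_all add: g_def)
        show ?case
        proof (cases "Suc k < m")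
          case True then show ?thesis using gs k by metis
        next
          case False then have "Suc k = m" using k by simp
          then show ?thesis using gs k r by metis
        qed
      qed
      then show ?thesis using im by metis
    qed
    then obtain m k where im: "inj_on g {..<m}" and k: "k < m" "g k = g n" by blast
    have "k \<noteq> 0" proof assume "k = 0" then show False using k yn by (simp add: g_def) qed
    then have m2: "m \<ge> 2" using k by simp
    have g0: "g 0 < g k" using k yn by (simp add: g_def)
    have pat: "same_order_patterns f1 y f2 (\<phi> y)" using assms(10) y by blast
    have "h 0 < h k"
      apply (rule pattern_transfer[OF im m2 _ _ k(1) g0])
      using pat m2 k unfolding same_order_patterns_def defines_pattern_def g_def h_def
      by auto
    then show ?thesis using commj[OF y, of k] k y unfolding h_def g_def by (simp add: commj[OF y])
  qed
  show ?thesis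
  proof (intro ballI impI)
    fix x x' assume x: "x \<in> X1" and x': "x' \<in> X1" and xx: "x < x'"
    show "\<phi> x < \<phi> x'"
    proof (rule ccontr)
      assume "\<not> \<phi> x < \<phi> x'"
      moreover have "\<phi> x \<noteq> \<phi> x'" using injphi x x' xx by (metis inj_onD less_irrefl)
      ultimately have lt: "\<phi> x' < \<phi> x" by simp
      define e where "e = (\<phi> x - \<phi> x') / 2"
      have e: "e > 0" using lt by (simp add: e_def)
      obtain d1 where d1: "d1 > 0" "\<forall>z\<in>X1. dist z x < d1 \<longrightarrow> dist (\<phi> z) (\<phi> x) < e"
        using assms(8) x e unfolding continuous_on_iff by blast
      obtain d2 where d2: "d2 > 0" "\<forall>z\<in>X1. dist z x' < d2 \<longrightarrow> dist (\<phi> z) (\<phi> x') < e"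
        using assms(8) x' e unfolding continuous_on_iff by blast
      define d where "d = min (min d1 d2) ((x' - x) / 2)"
      have d0: "d > 0" using d1 d2 xx unfolding d_def by simp
      have d4: "d \<le> (x' - x)/2" unfolding d_def by (rule min.cobounded2)
      have d: "d > 0" "d \<le> d1" "d \<le> d2" "d \<le> (x' - x)/2" using d0 d4 unfolding d_def by auto
      define U where "U = ball x d \<inter> X1"
      define V where "V = ball x' d \<inter> X1"
      have oU: "openin (top_of_set X1) U" unfolding U_def by (subst Int_commute) (rule openin_open_Int, simp)
      have oV: "openin (top_of_set X1) V" unfolding V_def by (subst Int_commute) (rule openin_open_Int, simp)
      have "x \<in> U" "x' \<in> V" using x x' d by (auto simp: U_def V_def)
      then obtain n where n: "n > 0" "(f1 ^^ n) ` U \<inter> V \<noteq> {}"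
        using assms(9) oU oV unfolding top_transitive_def by blast
      then obtain u where u: "u \<in> U" "(f1 ^^ n) u \<in> V" by blast
      have uX: "u \<in> X1" using u by (simp add: U_def)
      have "dist u x < d" "dist ((f1 ^^ n) u) x' < d" using u by (auto simp: U_def V_def dist_commute)
      then have ult: "u < (f1 ^^ n) u" using d by (auto simp: dist_real_def)
      have "dist (\<phi> u) (\<phi> x) < e" using d1 uX \<open>dist u x < d\<close> d by auto
      moreover have "dist (\<phi> ((f1 ^^ n) u)) (\<phi> x') < e"
        using d2 iterX[OF uX] \<open>dist ((f1 ^^ n) u) x' < d\<close> d by auto
      ultimately have "\<phi> ((f1 ^^ n) u) < \<phi> u" unfolding dist_real_def abs_less_iff e_def by (smt (verit) field_sum_of_halves)
      then show False using A[OF uX ult] by simp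
    qed
  qed
qed

end
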